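(* Let $p$ be a prime. Every $p$-$T_0T^\ast$-perfect number $n>1$ has the form $n=p_1^{2p-1}$ for some prime $p_1$.
   Context: For a positive integer $m$, $T(m)$ denotes the product of all positive divisors of $m$, and $T^\ast(m)$ the product of all unitary divisors of $m$ (divisors $d$ with $\gcd(d,m/d)=1$). For an integer $k\ge 2$, an integer $n>1$ is called $k$-$T_0T^\ast$-perfect if $T(T^\ast(n))=n^k$. *)

theory Defs
  imports "HOL-Computational_Algebra.Primes"
begin

definition divisor_prod :: "nat \<Rightarrow> nat" where
  "divisor_prod m = (\<Prod>d\<in>{d. d dvd m}. d)"

definition unitary_divisor_prod :: "nat \<Rightarrow> nat" where
  "unitary_divisor_prod m = (\<Prod>d\<in>{d. d dvd m \<and> coprime d (m div d)}. d)"

definition k_T0Tstar_perfect :: "nat \<Rightarrow> nat \<Rightarrow> bool" where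
  "k_T0Tstar_perfect k n \<longleftrightarrow> n > 1 \<and> divisor_prod (unitary_divisor_prod n) = n ^ k"

end

theory Submission
  imports Defs
begin


lemma pair_prod:
  fixes m :: nat and S :: "nat set"
  assumes "finite S" "m > 0" "\<And>d. d \<in> S \<Longrightarrow> d dvd m \<and> m div d \<in> S"
  shows "(\<Prod>d\<in>S. d) ^ 2 = m ^ card S"
proof -
  have "(\<Prod>d\<in>S. d) = (\<Prod>d\<in>S. m div d)"
    by (rule prod.reindex_bij_witness[where i="\<lambda>d. m div d" and j="\<lambda>d. m div d"])
       (use assms in \<open>auto simp: div_div_eq_right\<close>)
  hence "(\<Prod>d\<in>S. d) ^ 2 = (\<Prod>d\<in>S. d) * (\<Prod>d\<in>S. m div d)" by (simp add: power2_eq_square)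
  also have "\<dots> = (\<Prod>d\<in>S. d * (m div d))" by (simp add: prod.distrib)
  also have "\<dots> = (\<Prod>d\<in>S. m)" by (rule prod.cong) (use assms in auto)
  finally show ?thesis by simp
qed

lemma gcd_cop: "coprime (b::nat) x \<Longrightarrow> a dvd x \<Longrightarrow> gcd (a * b) x = a"
  by (simp add: coprime_commute gcd_mult_left_right_cancel)

lemma tau_mult:
  fixes x y :: nat
  assumes "coprime x y" "x > 0" "y > 0"
  shows "card {d. d dvd x * y} = card {d. d dvd x} * card {d. d dvd y}"
proof -
  have "bij_betw (\<lambda>(a,b). a * b) ({d. d dvd x} \<times> {d. d dvd y}) {d. d dvd x * y}"
  proof (rule bij_betwI')
    fix a b
    assume "a \<in> {d. d dvd x} \<times> {d. d dvd y}" "b \<in> {d. d dvd x} \<times> {d. d dvd y}"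
    then obtain a1 a2 b1 b2 where ab: "a = (a1,a2)" "b = (b1,b2)" "a1 dvd x" "a2 dvd y" "b1 dvd x" "b2 dvd y"
      by auto
    have c1: "coprime a2 x" "coprime b2 x" "coprime a1 y" "coprime b1 y"
      using assms ab by (meson coprime_commute coprime_divisors dvd_refl)+
    show "((\<lambda>(a,b). a * b) a = (\<lambda>(a,b). a * b) b) = (a = b)"
    proof
      assume h: "(\<lambda>(a,b). a * b) a = (\<lambda>(a,b). a * b) b"
      hence e: "a1 * a2 = b1 * b2" using ab by simp
      have "gcd (a1 * a2) x = a1" using c1 ab
        by (simp add: gcd_cop)
      moreover have "gcd (b1 * b2) x = b1" using c1 ab
        by (simp add: gcd_cop)
      moreover have "gcd (a1 * a2) y = a2" using c1 ab
        by (metis gcd_cop mult.commute)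
      moreover have "gcd (b1 * b2) y = b2" using c1 ab
        by (metis gcd_cop mult.commute)
      ultimately show "a = b" using e ab by simp
    qed simp
  next
    fix a assume "a \<in> {d. d dvd x} \<times> {d. d dvd y}"
    thus "(\<lambda>(a,b). a * b) a \<in> {d. d dvd x * y}" by (auto intro: mult_dvd_mono)
  next
    fix d assume "d \<in> {d. d dvd x * y}"
    then obtain a b where "d = a * b" "a dvd x" "b dvd y"
      using division_decomp by blast
    thus "\<exists>a\<in>{d. d dvd x} \<times> {d. d dvd y}. d = (\<lambda>(a,b). a * b) a" by auto
  qed
  hence "card {d. d dvd x * y} = card ({d. d dvd x} \<times> {d. d dvd y})"
    by (simp add: bij_betw_same_card)
  thus ?thesis by (simp add: card_cartesian_product)
qed

lemma gcd_split:
  fixes a b N :: nat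
  assumes "coprime a b" "N dvd a * b" shows "N = gcd N a * gcd N b"
proof -
  obtain a' b' where ab: "N = a' * b'" "a' dvd a" "b' dvd b" using division_decomp[OF assms(2)] by blast
  have "coprime b' a" "coprime a' b" using assms ab
    by (meson coprime_commute coprime_divisors dvd_refl)+
  hence "gcd N a = a'" "gcd N b = b'" using ab gcd_cop[of b' a a'] gcd_cop[of a' b b'] by (auto simp: mult.commute)
  thus ?thesis using ab by simp
qed
lemma arith3: "4 = (c::nat)*x*y \<Longrightarrow> 1 \<le> c \<Longrightarrow> 3 \<le> x \<Longrightarrow> 3 \<le> y \<Longrightarrow> False"
proof -
  assume h: "4 = c*x*y" "1 \<le> c" "3 \<le> x" "3 \<le> y"
  have "3*3 \<le> x*y" using h by (intro mult_le_mono) auto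
  moreover have "x*y \<le> c*(x*y)" using h by simp
  ultimately show False using h by (simp add: mult.assoc)
qed
lemma arith: "prime (p::nat) \<Longrightarrow> 4*p = u*x*y \<Longrightarrow> 4 \<le> u \<Longrightarrow> 3 \<le> x \<Longrightarrow> 3 \<le> (y::nat) \<Longrightarrow> False"
proof -
  assume h: "prime p" "4*p = u*x*y" "4 \<le> u" "3 \<le> x" "3 \<le> y"
  have p0: "p > 0" using h prime_gt_0_nat by blast
  have "p dvd u*x*y" using h(2) by (metis dvd_triv_right)
  hence "p dvd u \<or> p dvd x \<or> p dvd y" using h(1) by (simp add: prime_dvd_mult_iff)
  thus False
  proof (elim disjE)
    assume "p dvd u" then obtain c where c: "u = p*c" by blast
    hence "4 = c*x*y" using h(2) p0 by (simp add: mult.assoc)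
    moreover have "c \<ge> 1" using c h by (cases c) auto
    ultimately show False using arith3 h by blast
  next
    assume "p dvd x" then obtain c where c: "x = p*c" by blast
    hence "4 = c*u*y" using h(2) p0 by (simp add: ac_simps)
    moreover have "c \<ge> 1" using c h by (cases c) auto
    ultimately show False using arith3[of c u y] h by linarith
  next
    assume "p dvd y" then obtain c where c: "y = p*c" by blast
    hence "4 = c*u*x" using h(2) p0 by (simp add: ac_simps)
    moreover have "c \<ge> 1" using c h by (cases c) auto
    ultimately show False using arith3[of c u x] h by linarith
  qed
qed

lemma pp_unitary:
  fixes q a :: nat assumes "prime q" "0 < a"
  shows "{d. d dvd q^a \<and> coprime d (q^a div d)} = {1, q^a}"
proof (intro set_eqI iffI)
  fix d assume "d \<in> {d. d dvd q^a \<and> coprime d (q^a div d)}"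
  then obtain i where i: "i \<le> a" "d = q^i" "coprime d (q^a div d)"
    using divides_primepow_nat[OF assms(1)] by auto
  have q1: "q > 1" using assms prime_gt_1_nat by blast
  have "q^a div q^i = q^(a-i)" using i q1 by (simp add: power_diff)
  hence c: "coprime (q^i) (q^(a-i))" using i by simp
  have "i = 0 \<or> i = a"
  proof (rule ccontr)
    assume "\<not> (i = 0 \<or> i = a)"
    hence "q dvd q^i" "q dvd q^(a-i)" using i by auto
    thus False using c q1 coprime_common_divisor[of "q^i" "q^(a-i)" q] by auto
  qed
  thus "d \<in> {1, q^a}" using i by auto
next
  fix d assume "d \<in> {1, q^a}"
  moreover have "q^a > 0" using assms prime_gt_0_nat by simp
  ultimately show "d \<in> {d. d dvd q^a \<and> coprime d (q^a div d)}" by auto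
qed

lemma pp_tau:
  fixes q a :: nat assumes "prime q"
  shows "card {d. d dvd q^a} = a + 1"
proof -
  have q1: "q > 1" using assms prime_gt_1_nat by blast
  have "{d. d dvd q^a} = (\<lambda>i. q^i) ` {..a}" using divides_primepow_nat[OF assms] by auto
  moreover have "inj_on (\<lambda>i. q^i) {..a}" using q1 by (auto simp: inj_on_def)
  ultimately show ?thesis by (simp add: card_image)
qed

lemma tau3:
  fixes q A n u N :: nat
  assumes "prime q" "q dvd A" "A dvd n" "4 \<le> u" "N^2 = n^u" "n > 0"
  shows "3 \<le> card {d. d dvd gcd N (A^u)}"
proof -
  have q1: "q > 1" using assms prime_gt_1_nat by blast
  have N0: "N > 0" using assms by (metis gr0I power_not_zero zero_power2)
  have "q^4 dvd q^u" using assms by (simp add: le_imp_power_dvd)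
  also have "q^u dvd n^u" using assms by (meson dvd_trans dvd_power_same)
  finally have "q^4 dvd N^2" using assms by simp
  moreover have "(q^2)^2 = (q^4::nat)" by (simp flip: power_mult)
  ultimately have "(q^2)^2 dvd N^2" by simp
  hence qN: "q^2 dvd N" using pow_divides_pow_iff[of 2 "q^2" N] by simp
  have "q^2 dvd q^u" using assms by (simp add: le_imp_power_dvd)
  also have "q^u dvd A^u" using assms by (simp add: dvd_power_same)
  finally have "q^2 dvd gcd N (A^u)" using qN by simp
  moreover define X where "X = gcd N (A^u)"
  ultimately have qX: "q^2 dvd X" by simp
  have X0: "X > 0" using N0 X_def by simp
  have "q^2 \<le> X" using qX X0 by (simp add: dvd_imp_le)
  moreover have "q < q^2" using q1 by (simp add: power2_eq_square)
  ultimately have "X \<noteq> q" "X \<noteq> 1" using q1 by auto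
  hence "card {1, q, X} = 3" using q1 by auto
  moreover have "{1, q, X} \<subseteq> {d. d dvd X}" using qX
    by (auto intro: dvd_trans[of q "q^2"] simp: power2_eq_square)
  moreover have "finite {d. d dvd X}" using X0 by simp
  ultimately show ?thesis unfolding X_def[symmetric] by (metis card_mono)
qed

theorem mainTheorem7:
  fixes p n :: nat
  assumes "prime p" and "n > 1" and "k_T0Tstar_perfect p n"
  shows "\<exists>p1. prime p1 \<and> n = p1 ^ (2 * p - 1)"
proof -
  have n0: "n > 0" using assms by simp
  define U where "U = {d. d dvd n \<and> coprime d (n div d)}"
  define N where "N = unitary_divisor_prod n"
  define u where "u = card U"
  have finU: "finite U" unfolding U_def
    by (rule finite_subset[of _ "{d. d dvd n}"]) (use n0 in auto)
  have N2: "N^2 = n^u" unfolding N_def unitary_divisor_prod_def u_def U_def[symmetric]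
  proof (rule pair_prod[OF finU n0])
    fix d assume "d \<in> U"
    hence d: "d dvd n" "coprime d (n div d)" unfolding U_def by auto
    have "n div (n div d) = d" using d n0 by (simp add: div_div_eq_right)
    thus "d dvd n \<and> n div d \<in> U" using d unfolding U_def by (auto simp: coprime_commute)
  qed
  have N0: "N > 0" using N2 n0 by (metis gr0I power_not_zero zero_power2)
  have nU: "n \<in> U" unfolding U_def using n0 by simp
  have nN: "n dvd N" unfolding N_def unitary_divisor_prod_def U_def[symmetric]
    using finU nU by (rule dvd_prodI)
  define t where "t = card {d. d dvd N}"
  have T2: "(divisor_prod N)^2 = N^t" unfolding divisor_prod_def t_def
  proof (rule pair_prod[OF _ N0])
    show "finite {d. d dvd N}" using N0 by simp
    fix d assume "d \<in> {d. d dvd N}"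
    thus "d dvd N \<and> N div d \<in> {d. d dvd N}" by auto
  qed
  have Tn: "divisor_prod N = n^p" using assms(3) unfolding k_T0Tstar_perfect_def N_def by simp
  have "n^(4*p) = ((divisor_prod N)^2)^2" using Tn by (simp flip: power_mult)
  also have "\<dots> = (N^2)^t" using T2 by (simp flip: power_mult add: mult.commute)
  also have "\<dots> = n^(u*t)" using N2 by (simp flip: power_mult)
  finally have key: "4*p = u*t" using assms(2) by simp
  show ?thesis
  proof (cases "\<exists>q a. prime q \<and> n = q^a")
    case True
    then obtain q a where qa: "prime q" "n = q^a" by blast
    have a0: "0 < a" using qa assms(2) by (cases a) auto
    have "U = {1, n}" unfolding U_def qa(2) using pp_unitary[OF qa(1) a0] .
    hence "u = 2" unfolding u_def using assms(2) by simp
    hence "N^2 = n^2" using N2 by simp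
    hence "N = n" using power2_eq_iff_nonneg by (metis power_inject_base zero_le zero_less_numeral)
    hence "t = a + 1" unfolding t_def qa(2) using pp_tau[OF qa(1)] by simp
    hence "a = 2*p - 1" using key \<open>u = 2\<close> by simp
    thus ?thesis using qa by blast
  next
    case False
    obtain q where q: "prime q" "q dvd n" using prime_factor_nat assms(2) by (metis less_irrefl)
    define k where "k = multiplicity q n"
    define A where "A = q^k"
    define B where "B = n div A"
    have AB: "n = A * B" unfolding A_def B_def k_def by (simp add: multiplicity_dvd)
    have nqB: "\<not> q dvd B" unfolding A_def B_def k_def by (rule multiplicity_decompose) (use n0 q in auto)
    have k0: "k > 0" unfolding k_def using q n0 by (subst multiplicity_gt_zero_iff) auto
    have qA: "q dvd A" unfolding A_def using k0 by simp
    have copAB: "coprime A B" unfolding A_def using q nqB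
      by (simp add: prime_imp_coprime)
    have q1: "q > 1" using q prime_gt_1_nat by blast
    have A1: "A > 1" unfolding A_def using q1 k0 by (metis one_less_power)
    have B1: "B > 1"
    proof -
      have "B \<noteq> 0" using AB n0 by auto
      moreover have "B \<noteq> 1" using False AB q(1) unfolding A_def by (metis mult.right_neutral)
      ultimately show ?thesis by simp
    qed
    obtain r where r: "prime r" "r dvd B" using prime_factor_nat B1 by (metis less_irrefl)
    have "{1, A, B, n} \<subseteq> U" unfolding U_def using AB copAB n0
      by (auto simp: coprime_commute)
    moreover have "card {1, A, B, n} = 4"
    proof -
      have "A \<noteq> B" using copAB A1 by auto
      moreover have "A \<noteq> n" "B \<noteq> n" using AB A1 B1 by auto
      ultimately show ?thesis using A1 B1 assms(2) by auto
    qed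
    ultimately have u4: "4 \<le> u" unfolding u_def by (metis card_mono finU)
    have u0: "u > 0" using u4 by simp
    define X where "X = gcd N (A^u)"
    define Y where "Y = gcd N (B^u)"
    have cop2: "coprime (A^u) (B^u)" using copAB by simp
    have "N dvd N^2" by (simp add: power2_eq_square)
    hence "N dvd A^u * B^u" using N2 AB by (simp add: power_mult_distrib)
    hence NXY: "N = X * Y" unfolding X_def Y_def using cop2 gcd_split by blast
    have copXY: "coprime X Y" unfolding X_def Y_def using cop2
      by (meson coprime_divisors gcd_dvd2)
    have X0: "X > 0" "Y > 0" using NXY N0 by auto
    have "t = card {d. d dvd X} * card {d. d dvd Y}"
      unfolding t_def NXY using tau_mult[OF copXY X0] .
    moreover have "3 \<le> card {d. d dvd X}" unfolding X_def
      using tau3[OF q(1) qA _ u4 N2 n0] AB by simp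
    moreover have "3 \<le> card {d. d dvd Y}" unfolding Y_def
      using tau3[OF r(1) r(2) _ u4 N2 n0] AB by simp
    ultimately show ?thesis using key arith[OF assms(1)] u4 by (metis mult.assoc)
  qed
qed

end
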